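(* Let $G$ be an extraspecial $2$-group. (i) Two elements $g,h\in G$ are automorphic (i.e. $\varphi(g)=h$ for some $\varphi\in\mathrm{Aut}(G)$) if and only if $g$ and $h$ have the same order and ($g\in Z(G)\iff h\in Z(G)$). (ii) The number of orbits of the natural action of $\mathrm{Aut}(G)$ on $G$ is $3$ if $G$ is isomorphic to the quaternion group $Q_2$ of order $8$, and $4$ otherwise.
   Context: A special $p$-group is a finite $p$-group whose center, derived subgroup and Frattini subgroup coincide and are elementary abelian; it is extraspecial if $|Z(G)|=p$. *)

theory Defs
  imports "HOL-Algebra.Algebra"
begin

definition grp_center :: "('a, 'b) monoid_scheme \<Rightarrow> 'a set" where
  "grp_center G = {z \<in> carrier G. \<forall>g \<in> carrier G. z \<otimes>\<^bsub>G\<^esub> g = g \<otimes>\<^bsub>G\<^esub> z}"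

text \<open>Maximal subgroups and the Frattini subgroup (intersection of all maximal
  subgroups; equal to the whole group if there are none).\<close>
definition maximal_subgroup :: "'a set \<Rightarrow> ('a, 'b) monoid_scheme \<Rightarrow> bool" where
  "maximal_subgroup H G \<longleftrightarrow> subgroup H G \<and> H \<noteq> carrier G \<and>
     (\<forall>K. subgroup K G \<and> H \<subseteq> K \<longrightarrow> K = H \<or> K = carrier G)"

definition frattini :: "('a, 'b) monoid_scheme \<Rightarrow> 'a set" where
  "frattini G = carrier G \<inter> \<Inter> {H. maximal_subgroup H G}"

definition p_group :: "('a, 'b) monoid_scheme \<Rightarrow> nat \<Rightarrow> bool" where
  "p_group G p \<longleftrightarrow> group G \<and> Factorial_Ring.prime p \<and> finite (carrier G) \<and> (\<exists>n. order G = p ^ n)"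

definition elementary_abelian_subgroup :: "'a set \<Rightarrow> ('a, 'b) monoid_scheme \<Rightarrow> nat \<Rightarrow> bool" where
  "elementary_abelian_subgroup H G p \<longleftrightarrow> subgroup H G \<and>
     (\<forall>x \<in> H. \<forall>y \<in> H. x \<otimes>\<^bsub>G\<^esub> y = y \<otimes>\<^bsub>G\<^esub> x) \<and>
     (\<forall>x \<in> H. x [^]\<^bsub>G\<^esub> p = \<one>\<^bsub>G\<^esub>)"

definition special_p_group :: "('a, 'b) monoid_scheme \<Rightarrow> nat \<Rightarrow> bool" where
  "special_p_group G p \<longleftrightarrow> p_group G p \<and>
     grp_center G = derived G (carrier G) \<and> derived G (carrier G) = frattini G \<and>
     elementary_abelian_subgroup (grp_center G) G p"

definition extraspecial_p_group :: "('a, 'b) monoid_scheme \<Rightarrow> nat \<Rightarrow> bool" where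
  "extraspecial_p_group G p \<longleftrightarrow> special_p_group G p \<and> card (grp_center G) = p"

definition automorphic :: "('a, 'b) monoid_scheme \<Rightarrow> 'a \<Rightarrow> 'a \<Rightarrow> bool" where
  "automorphic G g h \<longleftrightarrow> (\<exists>\<phi> \<in> iso G G. \<phi> g = h)"

definition aut_orbits :: "('a, 'b) monoid_scheme \<Rightarrow> 'a set set" where
  "aut_orbits G = (\<lambda>g. {\<phi> g | \<phi>. \<phi> \<in> iso G G}) ` carrier G"

text \<open>The quaternion group Q_8 = {+-1, +-i, +-j, +-k}: an element is a pair
  (sign, unit), where sign True means negative.\<close>
datatype qunit = Q1 | QI | QJ | QK

fun qunit_mult :: "qunit \<Rightarrow> qunit \<Rightarrow> bool \<times> qunit" where
  "qunit_mult Q1 u = (False, u)"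
| "qunit_mult u Q1 = (False, u)"
| "qunit_mult QI QI = (True, Q1)"
| "qunit_mult QJ QJ = (True, Q1)"
| "qunit_mult QK QK = (True, Q1)"
| "qunit_mult QI QJ = (False, QK)"
| "qunit_mult QJ QI = (True, QK)"
| "qunit_mult QJ QK = (False, QI)"
| "qunit_mult QK QJ = (True, QI)"
| "qunit_mult QK QI = (False, QJ)"
| "qunit_mult QI QK = (True, QJ)"

definition quaternion_mult :: "bool \<times> qunit \<Rightarrow> bool \<times> qunit \<Rightarrow> bool \<times> qunit" where
  "quaternion_mult x y = (fst x \<noteq> (fst y \<noteq> fst (qunit_mult (snd x) (snd y))), snd (qunit_mult (snd x) (snd y)))"

definition quaternion_group :: "(bool \<times> qunit) monoid" where
  "quaternion_group = \<lparr> carrier = UNIV, monoid.mult = quaternion_mult, one = (False, Q1) \<rparr>"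

end

theory Submission
  imports Defs
begin


locale xs = group G for G (structure) +
  fixes z
  assumes fin: "finite (carrier G)"
  and Z_eq: "grp_center G = {\<one>, z}"
  and z_neq: "z \<noteq> \<one>"
  and zz: "z \<otimes> z = \<one>"
  and comm_in: "\<And>x y. x \<in> carrier G \<Longrightarrow> y \<in> carrier G \<Longrightarrow> x \<otimes> y \<otimes> inv x \<otimes> inv y \<in> {\<one>, z}"
  and sq_in: "\<And>x. x \<in> carrier G \<Longrightarrow> x \<otimes> x \<in> {\<one>, z}"
begin

lemma z_carr[simp]: "z \<in> carrier G"
  using Z_eq unfolding grp_center_def by auto

lemma z_central: "x \<in> carrier G \<Longrightarrow> z \<otimes> x = x \<otimes> z"
  using Z_eq unfolding grp_center_def by auto

lemma central_iff: "x \<in> carrier G \<Longrightarrow> x \<in> grp_center G \<longleftrightarrow> (\<forall>y\<in>carrier G. x \<otimes> y = y \<otimes> x)"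
  unfolding grp_center_def by auto

definition zp :: "bool \<Rightarrow> 'a" where "zp b = (if b then z else \<one>)"
definition cb :: "'a \<Rightarrow> 'a \<Rightarrow> bool" where "cb x y \<longleftrightarrow> x \<otimes> y \<noteq> y \<otimes> x"

lemma zp_carr[simp]: "zp b \<in> carrier G" by (simp add: zp_def)
lemma zp_central: "x \<in> carrier G \<Longrightarrow> zp b \<otimes> x = x \<otimes> zp b"
  by (simp add: zp_def z_central)
lemma zp_mult: "zp a \<otimes> zp b = zp (a \<noteq> b)"
  by (simp add: zp_def zz)
lemma zp_F[simp]: "zp False = \<one>" by (simp add: zp_def)

lemma cb_sym: "cb x y = cb y x" by (auto simp: cb_def)

lemma swap: assumes x: "x \<in> carrier G" and y: "y \<in> carrier G"
  shows "y \<otimes> x = x \<otimes> y \<otimes> zp (cb x y)"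
proof (cases "cb x y")
  case False then show ?thesis by (simp add: cb_def zp_def x y)
next
  case True
  have c: "x \<otimes> y \<otimes> inv x \<otimes> inv y \<in> {\<one>, z}" using comm_in x y .
  have "x \<otimes> y \<otimes> inv x \<otimes> inv y \<noteq> \<one>"
  proof
    assume "x \<otimes> y \<otimes> inv x \<otimes> inv y = \<one>"
    hence "x \<otimes> y \<otimes> inv x \<otimes> inv y \<otimes> y \<otimes> x = y \<otimes> x" using x y by simp
    hence "x \<otimes> y = y \<otimes> x" using x y by (simp add: m_assoc)
    thus False using True by (simp add: cb_def)
  qed
  hence e: "x \<otimes> y \<otimes> inv x \<otimes> inv y = z" using c by auto
  hence "x \<otimes> y \<otimes> inv x \<otimes> inv y \<otimes> y \<otimes> x = z \<otimes> y \<otimes> x" by simp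
  hence e2: "x \<otimes> y = z \<otimes> y \<otimes> x" using x y by (simp add: m_assoc)
  hence "z \<otimes> (x \<otimes> y) = z \<otimes> (z \<otimes> y \<otimes> x)" by simp
  also have "\<dots> = y \<otimes> x" using x y by (simp add: m_assoc[symmetric] zz)
  finally show ?thesis using True x y by (simp add: zp_def z_central m_assoc)
qed

lemma cb_mult: assumes "x \<in> carrier G" "y \<in> carrier G" "k \<in> carrier G"
  shows "cb (x \<otimes> y) k = (cb x k \<noteq> cb y k)"
proof -
  have "k \<otimes> (x \<otimes> y) = (k \<otimes> x) \<otimes> y" using assms by (simp add: m_assoc)
  also have "\<dots> = x \<otimes> k \<otimes> zp (cb x k) \<otimes> y" using swap[of x k] assms by simp
  also have "\<dots> = x \<otimes> (k \<otimes> y) \<otimes> zp (cb x k)" using assms by (simp add: m_assoc zp_central)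
  also have "\<dots> = x \<otimes> (y \<otimes> k \<otimes> zp (cb y k)) \<otimes> zp (cb x k)" using swap[of y k] assms by simp
  also have "\<dots> = x \<otimes> y \<otimes> k \<otimes> zp (cb y k \<noteq> cb x k)" using assms by (simp add: m_assoc zp_mult)
  finally have e: "k \<otimes> (x \<otimes> y) = x \<otimes> y \<otimes> k \<otimes> zp (cb y k \<noteq> cb x k)" .
  show ?thesis
    using e z_neq assms
    by (cases "cb x k"; cases "cb y k"; simp add: cb_def zp_def m_assoc; metis m_closed r_one)
qed

lemma cb_one[simp]: "cb \<one> k = False" "cb k \<one> = False" if "k \<in> carrier G" using that by (auto simp: cb_def)
lemma cb_self[simp]: "cb x x = False" by (simp add: cb_def)
lemma cb_zp[simp]: "k \<in> carrier G \<Longrightarrow> cb (zp b) k = False"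
  by (simp add: cb_def zp_central)
lemma cb_inv: assumes "x \<in> carrier G" "k \<in> carrier G" shows "cb (inv x) k = cb x k"
proof -
  have "(cb (inv x) k \<noteq> cb x k) = False" using cb_mult[of "inv x" x k] assms by simp
  thus ?thesis by simp
qed
lemma cb_mult2: assumes "x \<in> carrier G" "y \<in> carrier G" "k \<in> carrier G"
  shows "cb k (x \<otimes> y) = (cb k x \<noteq> cb k y)"
  using cb_mult[OF assms] by (simp add: cb_sym)

lemma noncentral_cb: "x \<in> carrier G \<Longrightarrow> x \<notin> grp_center G \<Longrightarrow> \<exists>k\<in>carrier G. cb x k"
  by (auto simp: central_iff cb_def)
lemma central_cb: "x \<in> carrier G \<Longrightarrow> (\<And>k. k \<in> carrier G \<Longrightarrow> \<not> cb x k) \<Longrightarrow> x \<in> grp_center G"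
  by (auto simp: central_iff cb_def)

definition bp :: "'a \<Rightarrow> bool \<Rightarrow> 'a" where "bp x b = (if b then x else \<one>)"
lemma bp_carr[simp]: "x \<in> carrier G \<Longrightarrow> bp x b \<in> carrier G" by (simp add: bp_def)
lemma cb_bp[simp]: "x \<in> carrier G \<Longrightarrow> k \<in> carrier G \<Longrightarrow> cb (bp x b) k = (b \<and> cb x k)"
  by (simp add: bp_def)

end

locale xs_gen = xs +
  fixes e w s
  assumes e_carr[simp]: "e \<in> carrier G" and w_carr[simp]: "w \<in> carrier G"
  and ee: "e \<otimes> e = \<one>" and ew: "e \<otimes> w = w \<otimes> e" and ww: "w \<otimes> w = zp s"
begin

definition R :: "bool \<Rightarrow> bool \<Rightarrow> bool \<Rightarrow> 'a" where
  "R p q r = bp w p \<otimes> bp e q \<otimes> zp r"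

lemma R_carr[simp]: "R p q r \<in> carrier G" by (simp add: R_def)

lemma ww_bp: "bp w p \<otimes> bp w p' = bp w (p \<noteq> p') \<otimes> zp (s \<and> p \<and> p')"
  by (cases p; cases p'; simp add: bp_def ww)
lemma ee_bp: "bp e q \<otimes> bp e q' = bp e (q \<noteq> q')"
  by (cases q; cases q'; simp add: bp_def ee)
lemma ew_bp: "bp e q \<otimes> bp w p' = bp w p' \<otimes> bp e q"
  by (cases q; cases p'; simp add: bp_def ew)

lemma R_mult: "R p q r \<otimes> R p' q' r' = R (p \<noteq> p') (q \<noteq> q') ((r \<noteq> r') \<noteq> (s \<and> p \<and> p'))"
proof -
  let ?W = "bp w p" and ?E = "bp e q" and ?W' = "bp w p'" and ?E' = "bp e q'"
  have "R p q r \<otimes> R p' q' r' = ?W \<otimes> (?E \<otimes> (zp r \<otimes> (?W' \<otimes> ?E')) \<otimes> zp r')" by (simp add: R_def m_assoc)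
  also have "\<dots> = ?W \<otimes> (?E \<otimes> ?W') \<otimes> ?E' \<otimes> (zp r \<otimes> zp r')"
    using zp_central[of "?W' \<otimes> ?E'" r] by (simp add: m_assoc)
  also have "\<dots> = (?W \<otimes> ?W') \<otimes> (?E \<otimes> ?E') \<otimes> zp (r \<noteq> r')"
    by (simp add: m_assoc ew_bp zp_mult)
  also have "\<dots> = bp w (p \<noteq> p') \<otimes> (zp (s \<and> p \<and> p') \<otimes> bp e (q \<noteq> q')) \<otimes> zp (r \<noteq> r')"
    by (simp add: ww_bp ee_bp m_assoc)
  also have "\<dots> = bp w (p \<noteq> p') \<otimes> bp e (q \<noteq> q') \<otimes> (zp (s \<and> p \<and> p') \<otimes> zp (r \<noteq> r'))"
    using zp_central[of "bp e (q \<noteq> q')" "s \<and> p \<and> p'"] by (simp add: m_assoc)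
  also have "\<dots> = R (p \<noteq> p') (q \<noteq> q') ((r \<noteq> r') \<noteq> (s \<and> p \<and> p'))"
    unfolding R_def by (simp add: zp_mult) (cases r; cases r'; cases s; cases p; cases p'; simp)
  finally show ?thesis .
qed

lemma R_zp: "R p q r \<otimes> zp t = R p q (r \<noteq> t)"
  by (simp add: R_def m_assoc zp_mult)

lemma cb_R: "k \<in> carrier G \<Longrightarrow> cb (R p q r) k = ((p \<and> cb w k) \<noteq> (q \<and> cb e k))"
  by (simp add: R_def cb_mult)


lemma gen_iso:
  fixes P Q T :: "bool \<Rightarrow> bool \<Rightarrow> bool"
  assumes P0: "\<not> P False False" "\<not> Q False False" "\<not> T False False"
  and hp: "\<And>a1 b1 a2 b2. P (a1 \<noteq> a2) (b1 \<noteq> b2) = (P a1 b1 \<noteq> P a2 b2)"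
  and hq: "\<And>a1 b1 a2 b2. Q (a1 \<noteq> a2) (b1 \<noteq> b2) = (Q a1 b1 \<noteq> Q a2 b2)"
  and ht: "\<And>a1 b1 a2 b2. T (a1 \<noteq> a2) (b1 \<noteq> b2) = (((T a1 b1 \<noteq> ((P a1 b1 \<and> b2) \<noteq> (Q a1 b1 \<and> a2))) \<noteq> T a2 b2) \<noteq> (s \<and> P a1 b1 \<and> P a2 b2))"
  shows "(\<lambda>x. x \<otimes> R (P (cb x e) (cb x w)) (Q (cb x e) (cb x w)) (T (cb x e) (cb x w))) \<in> iso G G"
proof -
  define Rx where "Rx x = R (P (cb x e) (cb x w)) (Q (cb x e) (cb x w)) (T (cb x e) (cb x w))" for x
  define \<phi> where "\<phi> x = x \<otimes> Rx x" for x
  have cl: "\<phi> x \<in> carrier G" if "x \<in> carrier G" for x using that by (simp add: \<phi>_def Rx_def)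
  have cbwe: "cb w e = False" "cb e w = False" using ew by (auto simp: cb_def)
  have hom: "\<phi> (x \<otimes> y) = \<phi> x \<otimes> \<phi> y" if x: "x \<in> carrier G" and y: "y \<in> carrier G" for x y
  proof -
    have "\<phi> x \<otimes> \<phi> y = x \<otimes> (Rx x \<otimes> y) \<otimes> Rx y" using x y by (simp add: \<phi>_def Rx_def m_assoc)
    also have "\<dots> = x \<otimes> (y \<otimes> Rx x \<otimes> zp (cb y (Rx x))) \<otimes> Rx y"
      using swap[of y "Rx x"] x y by (simp add: Rx_def)
    also have "\<dots> = x \<otimes> y \<otimes> (Rx x \<otimes> zp (cb y (Rx x)) \<otimes> Rx y)"
      using x y by (simp add: Rx_def m_assoc)
    also have "\<dots> = \<phi> (x \<otimes> y)"
    proof -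
      define a1 b1 a2 b2 where "a1 = cb x e" "b1 = cb x w" "a2 = cb y e" "b2 = cb y w"
      have c: "cb y (R (P a1 b1) (Q a1 b1) (T a1 b1)) = ((P a1 b1 \<and> b2) \<noteq> (Q a1 b1 \<and> a2))"
        using x y cb_sym[of y "R (P a1 b1) (Q a1 b1) (T a1 b1)"] cb_sym[of w y] cb_sym[of e y]
        by (simp add: Rx_def cb_R a1_b1_a2_b2_def)
      have m: "cb (x \<otimes> y) e = (a1 \<noteq> a2)" "cb (x \<otimes> y) w = (b1 \<noteq> b2)"
        using x y by (simp_all add: cb_mult a1_b1_a2_b2_def)
      show ?thesis unfolding \<phi>_def Rx_def m a1_b1_a2_b2_def[symmetric] c
        by (simp only: R_zp R_mult hp hq ht)
    qed
    finally show ?thesis by simp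
  qed
  have ker: "x = \<one>" if x: "x \<in> carrier G" and "\<phi> x = \<one>" for x
  proof -
    have "inv (Rx x) = x" using inv_equality[of x "Rx x"] that by (simp add: \<phi>_def Rx_def)
    hence c1: "cb x e = False" "cb x w = False"
      using cb_inv[of "Rx x" e] cb_inv[of "Rx x" w] by (auto simp: Rx_def cb_R cbwe)
    hence "Rx x = \<one>" using P0 by (simp add: Rx_def R_def bp_def)
    thus ?thesis using that by (simp add: \<phi>_def)
  qed
  have one: "\<phi> \<one> = \<one>" using P0 by (simp add: \<phi>_def Rx_def R_def bp_def)
  have inj: "inj_on \<phi> (carrier G)"
  proof (rule inj_onI)
    fix x y assume x: "x \<in> carrier G" and y: "y \<in> carrier G" and eq: "\<phi> x = \<phi> y"
    have "\<phi> (x \<otimes> inv y) = \<phi> y \<otimes> \<phi> (inv y)" using hom[of x "inv y"] x y eq by simp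
    also have "\<dots> = \<one>" using hom[of y "inv y"] y one by simp
    finally have "x \<otimes> inv y = \<one>" using ker x y by simp
    thus "x = y" using x y by (metis inv_equality inv_inv inv_closed)
  qed
  have img: "\<phi> ` carrier G = carrier G"
    by (rule endo_inj_surj[OF fin _ inj]) (use cl in auto)
  have "\<phi> \<in> hom G G" unfolding hom_def using cl hom by auto
  hence "\<phi> \<in> iso G G" using img inj by (simp add: iso_iff)
  moreover have "\<phi> = (\<lambda>x. x \<otimes> R (P (cb x e) (cb x w)) (Q (cb x e) (cb x w)) (T (cb x e) (cb x w)))"
    by (intro ext) (simp add: \<phi>_def Rx_def)
  ultimately show ?thesis by simp
qed

end





context xs begin

lemma Z_iff: "x \<in> grp_center G \<longleftrightarrow> x = \<one> \<or> x = z" using Z_eq by auto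

lemma sq_cases: "x \<in> carrier G \<Longrightarrow> x \<otimes> x = \<one> \<or> x \<otimes> x = z" using sq_in by auto

lemma zp_cases: "x \<in> grp_center G \<Longrightarrow> \<exists>b. x = zp b"
  using Z_eq by (auto simp: zp_def)

lemma ord_char: assumes x: "x \<in> carrier G"
  shows "ord x = (if x = \<one> then 1 else if x \<otimes> x = \<one> then 2 else 4)"
proof -
  have p2: "x [^] (2::nat) = x \<otimes> x" using x by (simp add: numeral_2_eq_2)
  have p4: "x [^] (4::nat) = (x \<otimes> x) \<otimes> (x \<otimes> x)"
    using x by (simp add: numeral_eq_Suc m_assoc)
  show ?thesis
  proof (cases "x = \<one>")
    case True thus ?thesis by simp
  next
    case n1: False
    hence o1: "ord x \<noteq> 1" using ord_eq_1 x by simp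
    show ?thesis
    proof (cases "x \<otimes> x = \<one>")
      case True
      hence "ord x dvd 2" using pow_eq_id[OF x, of 2] p2 by simp
      hence "ord x = 2" using o1 by (metis dvd_antisym one_less_numeral_iff nat_dvd_not_less semiring_norm(76) two_is_prime_nat prime_nat_iff)
      thus ?thesis using True n1 by simp
    next
      case False
      hence xz: "x \<otimes> x = z" using sq_cases x by auto
      hence "ord x dvd 4" using pow_eq_id[OF x, of 4] p4 zz by simp
      moreover have "\<not> ord x dvd 2" using pow_eq_id[OF x, of 2] p2 xz z_neq by simp
      ultimately have "ord x = 4"
      proof -
        assume a: "ord x dvd 4" "\<not> ord x dvd 2"
        have "ord x \<le> 4" using a(1) by (simp add: dvd_imp_le)
        moreover have "ord x \<noteq> 0" using a(1) by (rule_tac ccontr) simp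
        ultimately have "ord x \<in> {1,2,3,4}" by auto
        thus ?thesis using a o1 by auto
      qed
      thus ?thesis using False n1 by simp
    qed
  qed
qed

lemma iso_one: assumes "\<phi> \<in> iso G G" shows "\<phi> \<one> = \<one>"
proof -
  have h: "\<phi> \<in> hom G G" using assms by (simp add: iso_iff)
  have c: "\<phi> \<one> \<in> carrier G" using hom_in_carrier[OF h] by simp
  have "\<phi> \<one> = \<phi> \<one> \<otimes> \<phi> \<one>" using hom_mult[OF h, of \<one> \<one>] by simp
  thus ?thesis using c by (metis l_cancel_one')
qed

lemma iso_props: assumes phi: "\<phi> \<in> iso G G" and x: "x \<in> carrier G"
  shows "\<phi> x \<in> carrier G" "ord (\<phi> x) = ord x" "\<phi> x \<in> grp_center G \<longleftrightarrow> x \<in> grp_center G"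
proof -
  have h: "\<phi> \<in> hom G G" and inj: "inj_on \<phi> (carrier G)" and sur: "\<phi> ` carrier G = carrier G"
    using phi by (auto simp: iso_iff)
  show c: "\<phi> x \<in> carrier G" using hom_in_carrier[OF h x] .
  have one: "\<phi> \<one> = \<one>" using iso_one[OF phi] .
  have e1: "\<phi> x = \<one> \<longleftrightarrow> x = \<one>" using inj x one by (metis inj_on_eq_iff one_closed)
  have e2: "\<phi> x \<otimes> \<phi> x = \<one> \<longleftrightarrow> x \<otimes> x = \<one>"
    using inj x one hom_mult[OF h x x] by (metis inj_on_eq_iff one_closed m_closed)
  show "ord (\<phi> x) = ord x" using ord_char[OF c] ord_char[OF x] e1 e2 by simp
  show "\<phi> x \<in> grp_center G \<longleftrightarrow> x \<in> grp_center G"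
  proof
    assume a: "\<phi> x \<in> grp_center G"
    have "x \<otimes> y = y \<otimes> x" if y: "y \<in> carrier G" for y
    proof -
      have "\<phi> (x \<otimes> y) = \<phi> (y \<otimes> x)"
        using hom_mult[OF h x y] hom_mult[OF h y x] a hom_in_carrier[OF h y] by (simp add: central_iff c)
      thus ?thesis using inj x y by (simp add: inj_on_eq_iff)
    qed
    thus "x \<in> grp_center G" using x by (simp add: central_iff)
  next
    assume a: "x \<in> grp_center G"
    have "\<phi> x \<otimes> y = y \<otimes> \<phi> x" if y: "y \<in> carrier G" for y
    proof -
      obtain y' where y': "y' \<in> carrier G" "y = \<phi> y'" using y sur by auto
      show ?thesis using hom_mult[OF h x y'(1)] hom_mult[OF h y'(1) x] a y' x by (simp add: central_iff)
    qed
    thus "\<phi> x \<in> grp_center G" using c by (simp add: central_iff)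
  qed
qed

lemma aut_refl: "automorphic G g g"
  unfolding automorphic_def by (rule bexI[of _ "\<lambda>x. x"]) (simp_all add: iso_set_refl)

lemma trans1: assumes g: "g \<in> carrier G" and h: "h \<in> carrier G" and sq: "g \<otimes> g = h \<otimes> h" and c: "cb g h"
  shows "automorphic G g h"
proof -
  define a where "a = g \<otimes> inv h"
  have a: "a \<in> carrier G" using g h by (simp add: a_def)
  have cih: "cb g (inv h)" using cb_inv[OF h g] c by (simp add: cb_sym)
  have eq: "inv h \<otimes> g = g \<otimes> inv h \<otimes> z" using swap[OF g, of "inv h"] h cih by (simp add: zp_def)
  have "a \<otimes> a = g \<otimes> (inv h \<otimes> g) \<otimes> inv h" using g h by (simp add: a_def m_assoc)
  also have "\<dots> = g \<otimes> (g \<otimes> inv h \<otimes> z) \<otimes> inv h" by (simp only: eq)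
  also have "\<dots> = g \<otimes> g \<otimes> (inv h \<otimes> inv h) \<otimes> z" using g h z_central[of "inv h"]
    by (simp add: m_assoc)
  also have "\<dots> = z" using sq g h by (simp add: inv_mult_group[symmetric])
  finally have aa: "a \<otimes> a = zp True" by (simp add: zp_def)
  interpret xs_gen G z \<one> a True
    by unfold_locales (simp_all add: a aa)
  have "(\<lambda>x. x \<otimes> R ((\<lambda>a b. b) (cb x \<one>) (cb x a)) ((\<lambda>a b. False) (cb x \<one>) (cb x a)) ((\<lambda>a b. False) (cb x \<one>) (cb x a))) \<in> iso G G"
    by (rule gen_iso) auto
  moreover have "cb g a" using g h a cih by (simp add: a_def cb_mult2)
  moreover have "g \<otimes> a = h" using g h sq by (simp add: a_def m_assoc[symmetric]) (simp add: m_assoc)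
  ultimately show ?thesis unfolding automorphic_def
    by (intro bexI[where x="(\<lambda>x. x \<otimes> R ((\<lambda>a b. b) (cb x \<one>) (cb x a)) ((\<lambda>a b. False) (cb x \<one>) (cb x a)) ((\<lambda>a b. False) (cb x \<one>) (cb x a)))"])
      (simp_all add: R_def bp_def)
qed

lemma trans3: assumes g: "g \<in> carrier G" and nc: "g \<notin> grp_center G"
  shows "automorphic G g (g \<otimes> z)"
proof -
  obtain k where k: "k \<in> carrier G" "cb g k" using noncentral_cb[OF g nc] by auto
  define s where "s = (k \<otimes> k = z)"
  have kk: "k \<otimes> k = zp s" using sq_cases[OF k(1)] z_neq by (auto simp: s_def zp_def)
  interpret xs_gen G z \<one> k s
    by unfold_locales (simp_all add: k kk)
  let ?f = "(\<lambda>x. x \<otimes> R ((\<lambda>a b. False) (cb x \<one>) (cb x k)) ((\<lambda>a b. False) (cb x \<one>) (cb x k)) ((\<lambda>a b. b) (cb x \<one>) (cb x k)))"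
  have f1: "?f \<in> iso G G" by (rule gen_iso) auto
  have f2: "?f g = g \<otimes> z" using g k by (simp add: R_def bp_def zp_def)
  show ?thesis unfolding automorphic_def apply (rule bexI[of _ ?f]) using f1 f2 by simp_all
qed

lemma sep: assumes x: "x \<in> carrier G" and y: "y \<in> carrier G" and nx: "x \<notin> grp_center G"
  and nxy: "x \<otimes> inv y \<notin> grp_center G"
  shows "\<exists>w\<in>carrier G. \<not> cb y w \<and> cb x w"
proof (rule ccontr)
  assume H0: "\<not> ?thesis"
  hence H: "\<And>w. w \<in> carrier G \<Longrightarrow> \<not> cb y w \<Longrightarrow> \<not> cb x w" by blast
  obtain w1 where w1: "w1 \<in> carrier G" "cb x w1" using noncentral_cb[OF x nx] by auto
  have yw1: "cb y w1" using H w1 by blast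
  have eq: "cb x w = cb y w" if w: "w \<in> carrier G" for w
  proof (cases "cb y w")
    case True
    hence "\<not> cb y (w \<otimes> w1)" using cb_mult2[OF w w1(1) y] yw1 by simp
    hence "\<not> cb x (w \<otimes> w1)" using H w w1 by simp
    thus ?thesis using cb_mult2[OF w w1(1) x] w1 True by simp
  next
    case False thus ?thesis using H w by blast
  qed
  have "x \<otimes> inv y \<in> grp_center G"
    by (rule central_cb) (use x y eq in \<open>simp_all add: cb_mult cb_inv\<close>)
  thus False using nxy by simp
qed

lemma trans2: assumes g: "g \<in> carrier G" and h: "h \<in> carrier G" and sq: "g \<otimes> g = h \<otimes> h"
  and c: "\<not> cb g h" and ng: "g \<notin> grp_center G" and nh: "h \<notin> grp_center G"
  and ne: "inv g \<otimes> h \<notin> grp_center G"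
  shows "automorphic G g h"
proof -
  define e where "e = inv g \<otimes> h"
  have e: "e \<in> carrier G" using g h by (simp add: e_def)
  have gh: "g \<otimes> h = h \<otimes> g" using c by (simp add: cb_def)
  have gih: "inv g \<otimes> h = h \<otimes> inv g" using cb_inv[OF g h] c by (simp add: cb_def)
  have hig: "inv h \<otimes> g = g \<otimes> inv h" using cb_inv[OF h g] c cb_sym[of g h] by (simp add: cb_def)
  have "e \<otimes> e = inv g \<otimes> (h \<otimes> inv g) \<otimes> h" using g h by (simp add: e_def m_assoc)
  also have "\<dots> = inv g \<otimes> (inv g \<otimes> h) \<otimes> h" by (simp only: gih)
  also have "\<dots> = (inv g \<otimes> inv g) \<otimes> (h \<otimes> h)" using g h by (simp add: m_assoc)
  also have "\<dots> = \<one>" using g h sq by (simp add: inv_mult_group[symmetric])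
  finally have ee: "e \<otimes> e = \<one>" .
  have "g \<otimes> inv e = g \<otimes> (inv h \<otimes> g)" using g h by (simp add: e_def inv_mult_group)
  also have "\<dots> = (g \<otimes> g) \<otimes> inv h" using g h by (simp add: hig m_assoc)
  also have "\<dots> = h" using g h sq by (simp add: m_assoc)
  finally have ge: "g \<otimes> inv e = h" .
  obtain w where w: "w \<in> carrier G" "\<not> cb e w" "cb g w"
    using sep[OF g e ng] ge nh by auto
  define s where "s = (w \<otimes> w = z)"
  have ww: "w \<otimes> w = zp s" using sq_cases[OF w(1)] z_neq by (auto simp: s_def zp_def)
  have ew: "e \<otimes> w = w \<otimes> e" using w(2) by (simp add: cb_def)
  interpret xs_gen G z e w s
    by unfold_locales (simp_all add: e w ee ew ww)
  let ?f = "(\<lambda>x. x \<otimes> R ((\<lambda>a b. a) (cb x e) (cb x w)) ((\<lambda>a b. b \<noteq> (a \<and> s)) (cb x e) (cb x w)) ((\<lambda>a b. a \<and> b) (cb x e) (cb x w)))"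
  have f1: "?f \<in> iso G G" by (rule gen_iso) auto
  have "cb g e = False" using g h c by (simp add: e_def cb_mult2 cb_sym[of g "inv g"] cb_inv)
  moreover have "R False True False = e" by (simp add: R_def bp_def)
  moreover have "g \<otimes> e = h" using g h by (simp add: e_def m_assoc[symmetric])
  ultimately have f2: "?f g = h" using w by simp
  show ?thesis unfolding automorphic_def apply (rule bexI[of _ ?f]) using f1 f2 by simp_all
qed

end

context xs begin

lemma ord_z: "ord z = 2" using ord_char[of z] z_neq zz by simp
lemma one_Z: "\<one> \<in> grp_center G" using Z_eq by auto
lemma z_Z: "z \<in> grp_center G" using Z_eq by auto

lemma part_i: assumes g: "g \<in> carrier G" and h: "h \<in> carrier G"
  shows "automorphic G g h \<longleftrightarrow> (ord g = ord h \<and> (g \<in> grp_center G \<longleftrightarrow> h \<in> grp_center G))"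
proof
  assume "automorphic G g h"
  then obtain \<phi> where "\<phi> \<in> iso G G" "\<phi> g = h" unfolding automorphic_def by blast
  thus "ord g = ord h \<and> (g \<in> grp_center G \<longleftrightarrow> h \<in> grp_center G)" using iso_props[OF _ g] by auto
next
  assume a: "ord g = ord h \<and> (g \<in> grp_center G \<longleftrightarrow> h \<in> grp_center G)"
  show "automorphic G g h"
  proof (cases "g \<in> grp_center G")
    case True
    hence "h \<in> grp_center G" using a by simp
    hence "g = h" using True a ord_z z_neq by (auto simp: Z_iff)
    thus ?thesis using aut_refl by simp
  next
    case False
    hence hn: "h \<notin> grp_center G" using a by simp
    have g1: "g \<noteq> \<one>" and h1: "h \<noteq> \<one>" using False hn one_Z by auto
    have "(g \<otimes> g = \<one>) = (h \<otimes> h = \<one>)" using a ord_char[OF g] ord_char[OF h] g1 h1 by (auto split: if_splits)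
    hence sq: "g \<otimes> g = h \<otimes> h" using sq_cases[OF g] sq_cases[OF h] z_neq by auto
    show ?thesis
    proof (cases "cb g h")
      case True thus ?thesis using trans1 g h sq by blast
    next
      case c: False
      show ?thesis
      proof (cases "inv g \<otimes> h \<in> grp_center G")
        case True
        hence "inv g \<otimes> h = \<one> \<or> inv g \<otimes> h = z" by (simp add: Z_iff)
        moreover have "inv g \<otimes> h = \<one> \<Longrightarrow> h = g" using g h by (metis inv_equality inv_inv inv_closed)
        moreover have "inv g \<otimes> h = z \<Longrightarrow> h = g \<otimes> z"
        proof -
          assume "inv g \<otimes> h = z"
          hence "g \<otimes> (inv g \<otimes> h) = g \<otimes> z" by simp
          thus "h = g \<otimes> z" using g h by (simp add: m_assoc[symmetric])
        qed
        ultimately show ?thesis using aut_refl trans3[OF g False] by auto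
      next
        case False
        thus ?thesis using trans2[OF g h sq c] \<open>g \<notin> grp_center G\<close> hn by blast
      qed
    qed
  qed
qed

definition N2 where "N2 = {h \<in> carrier G. h \<notin> grp_center G \<and> h \<otimes> h = \<one>}"
definition N4 where "N4 = {h \<in> carrier G. h \<notin> grp_center G \<and> h \<otimes> h \<noteq> \<one>}"

lemma orb_eq: assumes g: "g \<in> carrier G"
  shows "{\<phi> g | \<phi>. \<phi> \<in> iso G G} = (if g = \<one> then {\<one>} else if g = z then {z} else if g \<otimes> g = \<one> then N2 else N4)"
proof -
  have "{\<phi> g | \<phi>. \<phi> \<in> iso G G} = {h. automorphic G g h}" unfolding automorphic_def by auto
  also have "\<dots> = {h \<in> carrier G. automorphic G g h}"
    using iso_props(1)[OF _ g] unfolding automorphic_def by auto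
  also have "\<dots> = {h \<in> carrier G. ord g = ord h \<and> (g \<in> grp_center G \<longleftrightarrow> h \<in> grp_center G)}"
    using part_i[OF g] by blast
  also have "\<dots> = (if g = \<one> then {\<one>} else if g = z then {z} else if g \<otimes> g = \<one> then N2 else N4)"
  proof -
    have A: "ord g = ord h \<longleftrightarrow> (g = \<one> \<longleftrightarrow> h = \<one>) \<and> (g \<otimes> g = \<one> \<longleftrightarrow> h \<otimes> h = \<one>)" if h: "h \<in> carrier G" for h
      using ord_char[OF g] ord_char[OF h] by auto
    have S: "{h \<in> carrier G. ord g = ord h \<and> (g \<in> grp_center G \<longleftrightarrow> h \<in> grp_center G)} =
       {h \<in> carrier G. (g = \<one> \<longleftrightarrow> h = \<one>) \<and> (g \<otimes> g = \<one> \<longleftrightarrow> h \<otimes> h = \<one>) \<and> (g \<in> grp_center G \<longleftrightarrow> h \<in> grp_center G)}"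
      using A by blast
    have T: "{h \<in> carrier G. (g = \<one> \<longleftrightarrow> h = \<one>) \<and> (g \<otimes> g = \<one> \<longleftrightarrow> h \<otimes> h = \<one>) \<and> (g \<in> grp_center G \<longleftrightarrow> h \<in> grp_center G)}
       = (if g = \<one> then {\<one>} else if g = z then {z} else if g \<otimes> g = \<one> then N2 else N4)"
    proof (cases "g = \<one>")
      case True thus ?thesis by (auto simp: Z_iff)
    next
      case g1: False
      show ?thesis
      proof (cases "g = z")
        case True thus ?thesis using g1 zz by (auto simp: Z_iff)
      next
        case False
        hence "g \<notin> grp_center G" using g1 by (simp add: Z_iff)
        thus ?thesis using g1 False one_Z by (auto simp: N2_def N4_def)
      qed
    qed
    show ?thesis using S T by simp
  qed
  finally show ?thesis .
qed

lemma N4_ne: assumes nab: "\<exists>x\<in>carrier G. x \<notin> grp_center G" shows "N4 \<noteq> {}"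
proof
  assume N: "N4 = {}"
  have sq1: "x \<otimes> x = \<one>" if x: "x \<in> carrier G" for x
  proof (cases "x \<in> grp_center G")
    case True thus ?thesis using zz by (auto simp: Z_iff)
  next
    case False thus ?thesis using N x unfolding N4_def by auto
  qed
  have invx: "inv x = x" if x: "x \<in> carrier G" for x using inv_equality[OF sq1[OF x] x x] .
  obtain x where x: "x \<in> carrier G" "x \<notin> grp_center G" using nab by auto
  obtain k where k: "k \<in> carrier G" "cb x k" using noncentral_cb[OF x] by auto
  have "x \<otimes> k = inv (x \<otimes> k)" using invx[of "x \<otimes> k"] x k by simp
  also have "\<dots> = k \<otimes> x" using inv_mult_group[of x k] invx[OF x(1)] invx[OF k(1)] x k by simp
  finally show False using k by (simp add: cb_def)
qed

lemma orbits_eq: assumes nab: "\<exists>x\<in>carrier G. x \<notin> grp_center G"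
  shows "aut_orbits G = insert {\<one>} (insert {z} (insert N4 (if N2 = {} then {} else {N2})))"
proof -
  have orb: "(\<lambda>g. {\<phi> g | \<phi>. \<phi> \<in> iso G G}) g = (if g = \<one> then {\<one>} else if g = z then {z} else if g \<otimes> g = \<one> then N2 else N4)"
    if "g \<in> carrier G" for g using orb_eq[OF that] by simp
  obtain y where y: "y \<in> N4" using N4_ne[OF nab] by auto
  have y': "y \<in> carrier G" "y \<noteq> \<one>" "y \<noteq> z" "y \<otimes> y \<noteq> \<one>" using y one_Z z_Z by (auto simp: N4_def)
  show ?thesis unfolding aut_orbits_def
  proof (rule equalityI; rule subsetI)
    fix Sx assume "Sx \<in> (\<lambda>g. {\<phi> g | \<phi>. \<phi> \<in> iso G G}) ` carrier G"
    then obtain g where g0: "g \<in> carrier G" "Sx = {\<phi> g | \<phi>. \<phi> \<in> iso G G}" by blast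
    have g: "g \<in> carrier G" "Sx = (if g = \<one> then {\<one>} else if g = z then {z} else if g \<otimes> g = \<one> then N2 else N4)"
      using g0 orb[OF g0(1)] by simp_all
    have "g \<otimes> g = \<one> \<Longrightarrow> g \<noteq> \<one> \<Longrightarrow> g \<noteq> z \<Longrightarrow> N2 \<noteq> {}" using g(1) by (auto simp: N2_def Z_iff)
    thus "Sx \<in> insert {\<one>} (insert {z} (insert N4 (if N2 = {} then {} else {N2})))" using g by auto
  next
    fix Sx assume Sx: "Sx \<in> insert {\<one>} (insert {z} (insert N4 (if N2 = {} then {} else {N2})))"
    have c1: "{\<one>} \<in> (\<lambda>g. {\<phi> g | \<phi>. \<phi> \<in> iso G G}) ` carrier G" using orb[of \<one>] by (intro image_eqI[of _ _ \<one>]) auto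
    have c2: "{z} \<in> (\<lambda>g. {\<phi> g | \<phi>. \<phi> \<in> iso G G}) ` carrier G" using orb[of z] z_neq by (intro image_eqI[of _ _ z]) auto
    have c3: "N4 \<in> (\<lambda>g. {\<phi> g | \<phi>. \<phi> \<in> iso G G}) ` carrier G" using orb[of y] y' by (intro image_eqI[of _ _ y]) auto
    have c4: "N2 \<in> (\<lambda>g. {\<phi> g | \<phi>. \<phi> \<in> iso G G}) ` carrier G" if ne: "N2 \<noteq> {}"
    proof -
      obtain u where u: "u \<in> N2" using ne by auto
      have u': "u \<in> carrier G" "u \<noteq> \<one>" "u \<noteq> z" "u \<otimes> u = \<one>" using u one_Z z_Z by (auto simp: N2_def)
      show ?thesis using orb[of u] u' by (intro image_eqI[of _ _ u]) auto
    qed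
    show "Sx \<in> (\<lambda>g. {\<phi> g | \<phi>. \<phi> \<in> iso G G}) ` carrier G"
      using Sx c1 c2 c3 c4 by (auto split: if_splits)
  qed
qed

lemma card_orbits: assumes nab: "\<exists>x\<in>carrier G. x \<notin> grp_center G"
  shows "card (aut_orbits G) = (if N2 = {} then 3 else 4)"
proof -
  obtain y where y: "y \<in> N4" using N4_ne[OF nab] by auto
  have n1: "N4 \<noteq> {\<one>}" "N4 \<noteq> {z}" using y one_Z z_Z by (auto simp: N4_def)
  have n2: "N2 \<noteq> {} \<Longrightarrow> N2 \<noteq> {\<one>} \<and> N2 \<noteq> {z} \<and> N2 \<noteq> N4" using y one_Z z_Z
    by (auto simp: N4_def N2_def)
  have n0: "{\<one>} \<noteq> {z}" using z_neq by auto
  show ?thesis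
  proof (cases "N2 = {}")
    case True thus ?thesis unfolding orbits_eq[OF nab] using n0 n1 by (auto simp: card_insert_if)
  next
    case False thus ?thesis unfolding orbits_eq[OF nab] using n0 n1 n2 by (auto simp: card_insert_if)
  qed
qed

end




lemma qm_assoc: "quaternion_mult (quaternion_mult x y) w = quaternion_mult x (quaternion_mult y w)"
proof -
  obtain a u where x: "x = (a, u)" by fastforce
  obtain b v where y: "y = (b, v)" by fastforce
  obtain c t where w: "w = (c, t)" by fastforce
  show ?thesis unfolding x y w quaternion_mult_def
    by (cases u; cases v; cases t; simp; blast)
qed

lemma group_Q8: "group quaternion_group"
proof (rule groupI)
  fix x assume "x \<in> carrier quaternion_group"
  obtain a u where x: "x = (a, u)" by fastforce
  show "\<exists>y\<in>carrier quaternion_group. y \<otimes>\<^bsub>quaternion_group\<^esub> x = \<one>\<^bsub>quaternion_group\<^esub>"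
    unfolding x quaternion_group_def
    by (cases u) (rule bexI[of _ "(a, Q1)"], simp add: quaternion_mult_def, simp,
         rule bexI[of _ "(\<not> a, QI)"], simp add: quaternion_mult_def, simp,
         rule bexI[of _ "(\<not> a, QJ)"], simp add: quaternion_mult_def, simp,
         rule bexI[of _ "(\<not> a, QK)"], simp add: quaternion_mult_def, simp)
qed (auto simp: quaternion_group_def qm_assoc, simp add: quaternion_mult_def)

lemma q_sq1: "quaternion_mult x x = (False, Q1) \<Longrightarrow> snd x = Q1"
  by (cases x; rename_tac a u; case_tac u; simp add: quaternion_mult_def)

lemma q_idem: "quaternion_mult x x = x \<Longrightarrow> x = (False, Q1)"
  by (cases x; rename_tac a u; case_tac u; case_tac a; simp add: quaternion_mult_def)

lemma q_central: "quaternion_mult (True, Q1) y = quaternion_mult y (True, Q1)"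
  by (cases y; rename_tac a u; case_tac u; simp add: quaternion_mult_def)


fun qenc :: "qunit \<Rightarrow> bool \<times> bool" where
  "qenc Q1 = (False, False)" | "qenc QI = (True, False)" | "qenc QJ = (False, True)" | "qenc QK = (True, True)"

lemma qenc_inj: "qenc u = qenc v \<Longrightarrow> u = v"
  by (cases u; cases v; simp)

lemma qenc_surj: "\<exists>u. qenc u = (b, c)"
  by (cases b; cases c) (auto intro: qenc.simps)

locale xs_q = xs +
  fixes i j
  assumes i_carr[simp]: "i \<in> carrier G" and j_carr[simp]: "j \<in> carrier G"
  and ii: "i \<otimes> i = z" and jj: "j \<otimes> j = z" and cij: "cb i j"
  and noN2: "N2 = {}"
begin

definition Nf where "Nf a b c = zp a \<otimes> bp i b \<otimes> bp j c"

lemma Nf_carr[simp]: "Nf a b c \<in> carrier G" by (simp add: Nf_def)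

lemma ii_bp: "bp i b \<otimes> bp i b' = bp i (b \<noteq> b') \<otimes> zp (b \<and> b')"
  by (cases b; cases b'; simp add: bp_def ii zp_def)
lemma jj_bp: "bp j b \<otimes> bp j b' = bp j (b \<noteq> b') \<otimes> zp (b \<and> b')"
  by (cases b; cases b'; simp add: bp_def jj zp_def)
lemma ji_bp: "bp j c \<otimes> bp i b' = bp i b' \<otimes> bp j c \<otimes> zp (b' \<and> c)"
proof -
  have "bp j c \<otimes> bp i b' = bp i b' \<otimes> bp j c \<otimes> zp (cb (bp i b') (bp j c))"
    using swap[of "bp i b'" "bp j c"] by simp
  moreover have "cb (bp i b') (bp j c) = (b' \<and> c)"
    using cij cb_sym[of j i] cb_sym[of i "bp j c"] by simp
  ultimately show ?thesis by simp
qed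

lemma ii_bp': "y \<in> carrier G \<Longrightarrow> bp i b \<otimes> (bp i b' \<otimes> y) = bp i (b \<noteq> b') \<otimes> (zp (b \<and> b') \<otimes> y)"
  using ii_bp by (simp add: m_assoc[symmetric])
lemma jj_bp': "y \<in> carrier G \<Longrightarrow> bp j b \<otimes> (bp j b' \<otimes> y) = bp j (b \<noteq> b') \<otimes> (zp (b \<and> b') \<otimes> y)"
  using jj_bp by (simp add: m_assoc[symmetric])
lemma ji_bp': "y \<in> carrier G \<Longrightarrow> bp j c \<otimes> (bp i b' \<otimes> y) = bp i b' \<otimes> (bp j c \<otimes> (zp (b' \<and> c) \<otimes> y))"
  using ji_bp by (simp add: m_assoc[symmetric])
lemma zI: "zp a \<otimes> bp i b = bp i b \<otimes> zp a" by (simp add: zp_central)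
lemma zJ: "zp a \<otimes> bp j b = bp j b \<otimes> zp a" by (simp add: zp_central)
lemma zI': "y \<in> carrier G \<Longrightarrow> zp a \<otimes> (bp i b \<otimes> y) = bp i b \<otimes> (zp a \<otimes> y)"
  by (simp add: m_assoc[symmetric] zI)
lemma zJ': "y \<in> carrier G \<Longrightarrow> zp a \<otimes> (bp j b \<otimes> y) = bp j b \<otimes> (zp a \<otimes> y)"
  by (simp add: m_assoc[symmetric] zJ)
lemma zz': "y \<in> carrier G \<Longrightarrow> zp a \<otimes> (zp b \<otimes> y) = zp (a \<noteq> b) \<otimes> y"
  by (simp add: m_assoc[symmetric] zp_mult)

lemma N_mult: "Nf a b c \<otimes> Nf a' b' c' = Nf ((((a \<noteq> a') \<noteq> (b' \<and> c)) \<noteq> (b \<and> b')) \<noteq> (c \<and> c')) (b \<noteq> b') (c \<noteq> c')"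
  apply (simp add: Nf_def m_assoc zI zJ zI' zJ' zz' zp_mult ii_bp' jj_bp' ji_bp' ii_bp jj_bp ji_bp)
  apply (rule arg_cong[where f=zp])
  apply blast
  done

lemma cb_Nf: "cb (Nf a b c) i = c" "cb (Nf a b c) j = b"
  using cij cb_sym[of j i] by (simp_all add: Nf_def cb_mult)

definition \<psi> :: "bool \<times> qunit \<Rightarrow> 'a" where
  "\<psi> x = Nf (fst x) (fst (qenc (snd x))) (snd (qenc (snd x)))"

lemma psi_hom: "\<psi> (quaternion_mult x y) = \<psi> x \<otimes> \<psi> y"
proof -
  obtain a u where x: "x = (a, u)" by fastforce
  obtain b v where y: "y = (b, v)" by fastforce
  show ?thesis unfolding x y \<psi>_def N_mult
    by (cases u; cases v; simp add: quaternion_mult_def; metis)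
qed

lemma psi_inj: "inj \<psi>"
proof (rule injI)
  fix x y assume e: "\<psi> x = \<psi> y"
  obtain a u where x: "x = (a, u)" by fastforce
  obtain b v where y: "y = (b, v)" by fastforce
  obtain p q where pq: "qenc u = (p, q)" by fastforce
  obtain p' q' where pq': "qenc v = (p', q')" by fastforce
  have e1: "Nf a p q = Nf b p' q'" using e by (simp add: \<psi>_def x y pq pq')
  have "q = q'" "p = p'" using arg_cong[OF e1, of "\<lambda>t. cb t i"] arg_cong[OF e1, of "\<lambda>t. cb t j"] by (simp_all add: cb_Nf)
  hence "zp a = zp b" using e1 by (simp add: Nf_def m_assoc)
  hence "a = b" using z_neq by (cases a; cases b; simp add: zp_def)
  thus "x = y" using x y pq pq' \<open>q = q'\<close> \<open>p = p'\<close> qenc_inj by auto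
qed

lemma psi_surj: "\<psi> ` UNIV = carrier G"
proof
  show "\<psi> ` UNIV \<subseteq> carrier G" by (auto simp: \<psi>_def)
next
  show "carrier G \<subseteq> \<psi> ` UNIV"
  proof
    fix x assume x: "x \<in> carrier G"
    define b c where "b = cb x j" and "c = cb x i"
    define y where "y = x \<otimes> inv (bp i b \<otimes> bp j c)"
    have y: "y \<in> carrier G" using x by (simp add: y_def)
    have yi: "\<not> cb y i" using x cij cb_sym[of j i] by (simp add: y_def cb_mult cb_inv b_def c_def)
    have yj: "\<not> cb y j" using x cij by (simp add: y_def cb_mult cb_inv b_def c_def)
    have "y \<in> grp_center G"
    proof (rule ccontr)
      assume nc: "y \<notin> grp_center G"
      hence yy: "y \<otimes> y = z" using noN2 y sq_cases[OF y] by (auto simp: N2_def)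
      have yi': "y \<otimes> i = i \<otimes> y" using yi by (simp add: cb_def)
      have ncyi: "y \<otimes> i \<notin> grp_center G"
      proof
        assume "y \<otimes> i \<in> grp_center G"
        hence "\<not> cb (y \<otimes> i) j" using central_iff y by (simp add: cb_def)
        thus False using y yj cij by (simp add: cb_mult)
      qed
      have "(y \<otimes> i) \<otimes> (y \<otimes> i) = y \<otimes> (i \<otimes> y) \<otimes> i" using y by (simp add: m_assoc)
      also have "\<dots> = y \<otimes> (y \<otimes> i) \<otimes> i" by (simp only: yi')
      also have "\<dots> = (y \<otimes> y) \<otimes> (i \<otimes> i)" using y by (simp add: m_assoc)
      also have "\<dots> = \<one>" using yy ii zz by simp
      finally have "y \<otimes> i \<in> N2" using ncyi y by (simp add: N2_def)
      thus False using noN2 by simp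
    qed
    then obtain a where a: "y = zp a" using zp_cases by blast
    have "x = y \<otimes> (bp i b \<otimes> bp j c)" using x by (simp add: y_def m_assoc)
    hence "x = Nf a b c" using a by (simp add: Nf_def m_assoc)
    moreover obtain u where "qenc u = (b, c)" using qenc_surj by blast
    ultimately have "x = \<psi> (a, u)" by (simp add: \<psi>_def)
    thus "x \<in> \<psi> ` UNIV" by blast
  qed
qed

lemma Q8_iso: "G \<cong> quaternion_group"
proof -
  have "\<psi> \<in> iso quaternion_group G"
  proof (rule isoI)
    show "\<psi> \<in> hom quaternion_group G"
    proof (rule homI)
      show "\<psi> x \<in> carrier G" for x by (simp add: \<psi>_def)
      show "\<psi> (x \<otimes>\<^bsub>quaternion_group\<^esub> y) = \<psi> x \<otimes> \<psi> y" for x y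
        by (simp add: quaternion_group_def psi_hom)
    qed
    show "bij_betw \<psi> (carrier quaternion_group) (carrier G)"
      using psi_inj psi_surj by (simp add: bij_betw_def quaternion_group_def)
  qed
  hence "quaternion_group \<cong> G" by (rule is_isoI)
  thus ?thesis by (rule group.iso_sym[OF group_Q8])
qed

end

context xs begin

lemma Q8_imp: assumes "G \<cong> quaternion_group" shows "N2 = {}"
proof (rule ccontr)
  assume "N2 \<noteq> {}"
  then obtain g where g: "g \<in> carrier G" "g \<notin> grp_center G" "g \<otimes> g = \<one>" by (auto simp: N2_def)
  obtain \<psi> where psi: "\<psi> \<in> iso G quaternion_group" using assms by (auto simp: is_iso_def)
  have h: "\<psi> \<in> hom G quaternion_group" and inj: "inj_on \<psi> (carrier G)" using psi by (auto simp: iso_iff)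
  have hm: "\<psi> (x \<otimes> y) = quaternion_mult (\<psi> x) (\<psi> y)" if "x \<in> carrier G" "y \<in> carrier G" for x y
    using hom_mult[OF h that] by (simp add: quaternion_group_def)
  have "\<psi> \<one> = quaternion_mult (\<psi> \<one>) (\<psi> \<one>)" using hm[of \<one> \<one>] by simp
  hence p1: "\<psi> \<one> = (False, Q1)" using q_idem by metis
  have "quaternion_mult (\<psi> g) (\<psi> g) = (False, Q1)" using hm[of g g] g p1 by simp
  hence "snd (\<psi> g) = Q1" by (rule q_sq1)
  moreover have "\<psi> g \<noteq> (False, Q1)"
  proof
    assume "\<psi> g = (False, Q1)"
    hence "\<psi> g = \<psi> \<one>" using p1 by simp
    hence "g = \<one>" using inj g by (simp add: inj_on_eq_iff)
    thus False using g one_Z by simp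
  qed
  ultimately have pg: "\<psi> g = (True, Q1)" by (cases "\<psi> g") auto
  have "g \<otimes> y = y \<otimes> g" if y: "y \<in> carrier G" for y
  proof -
    have "\<psi> (g \<otimes> y) = quaternion_mult (True, Q1) (\<psi> y)" using hm[OF g(1) y] pg by simp
    also have "\<dots> = quaternion_mult (\<psi> y) (True, Q1)" by (rule q_central)
    also have "\<dots> = \<psi> (y \<otimes> g)" using hm[OF y g(1)] pg by simp
    finally show ?thesis using inj_onD[OF inj] g(1) y by simp
  qed
  thus False using g(1,2) by (simp add: central_iff)
qed

lemma Q8_iff: assumes nab: "\<exists>x\<in>carrier G. x \<notin> grp_center G"
  shows "G \<cong> quaternion_group \<longleftrightarrow> N2 = {}"
proof
  assume "N2 = {}"
  obtain i0 where i0: "i0 \<in> carrier G" "i0 \<notin> grp_center G" using nab by auto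
  obtain j0 where j0: "j0 \<in> carrier G" "cb i0 j0" using noncentral_cb[OF i0] by auto
  have j0n: "j0 \<notin> grp_center G"
  proof
    assume "j0 \<in> grp_center G"
    hence "j0 \<otimes> i0 = i0 \<otimes> j0" using i0 central_iff[OF j0(1)] by auto
    thus False using j0 by (simp add: cb_def)
  qed
  have ii0: "i0 \<otimes> i0 = z" using sq_cases[OF i0(1)] i0 \<open>N2 = {}\<close> by (auto simp: N2_def)
  have jj0: "j0 \<otimes> j0 = z" using sq_cases[OF j0(1)] j0n j0 \<open>N2 = {}\<close> by (auto simp: N2_def)
  interpret xs_q G z i0 j0 by unfold_locales (simp_all add: i0 j0 ii0 jj0 \<open>N2 = {}\<close>)
  show "G \<cong> quaternion_group" by (rule Q8_iso)
qed (rule Q8_imp)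

end




context group begin

lemma my_cancel: "x \<in> carrier G \<Longrightarrow> y \<in> carrier G \<Longrightarrow> x \<otimes> (inv x \<otimes> y) = y"
  by (simp add: m_assoc[symmetric])

lemma sq_in_maximal:
  assumes ordG: "order G = 2 ^ n"
  and comm: "\<And>x y. x \<in> carrier G \<Longrightarrow> y \<in> carrier G \<Longrightarrow> x \<otimes> y \<otimes> inv x \<otimes> inv y \<in> M"
  and M: "maximal_subgroup M G" and x: "x \<in> carrier G"
  shows "x \<otimes> x \<in> M"
proof (rule ccontr)
  assume na: "x \<otimes> x \<notin> M"
  define a where "a = x \<otimes> x"
  have a: "a \<in> carrier G" using x by (simp add: a_def)
  have sM: "subgroup M G" using M by (simp add: maximal_subgroup_def)
  have Mc: "M \<subseteq> carrier G" using subgroup.subset[OF sM] .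
  have conj: "inv g \<otimes> m \<otimes> g \<in> M" if g: "g \<in> carrier G" and m: "m \<in> M" for g m
  proof -
    have mc: "m \<in> carrier G" using m Mc by auto
    have "m \<otimes> (inv m \<otimes> inv g \<otimes> inv (inv m) \<otimes> inv (inv g)) = (m \<otimes> inv m) \<otimes> (inv g \<otimes> m \<otimes> g)"
      using g mc by (simp add: m_assoc[symmetric] del: r_inv)
    hence "inv g \<otimes> m \<otimes> g = m \<otimes> (inv m \<otimes> inv g \<otimes> inv (inv m) \<otimes> inv (inv g))"
      using g mc by simp
    also have "\<dots> \<in> M" using comm[of "inv m" "inv g"] g mc m subgroup.m_closed[OF sM] by simp
    finally show ?thesis .
  qed
  define S where "S = {a [^] (k::int) \<otimes> m | k m. m \<in> M}"
  have sS: "subgroup S G"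
  proof (rule subgroupI)
    show "S \<subseteq> carrier G" using a Mc by (auto simp: S_def)
    show "S \<noteq> {}" using subgroup.one_closed[OF sM] unfolding S_def by blast
  next
    fix y assume "y \<in> S"
    then obtain k m where y: "y = a [^] (k::int) \<otimes> m" and m: "m \<in> M" by (auto simp: S_def)
    have mc: "m \<in> carrier G" using m Mc by auto
    have "inv y = inv m \<otimes> a [^] (-k)" using a mc by (simp add: y inv_mult_group int_pow_neg)
    also have "\<dots> = a [^] (-k) \<otimes> (inv (a [^] (-k)) \<otimes> inv m \<otimes> a [^] (-k))"
      using a mc by (simp add: m_assoc[symmetric])
    finally have "inv y = a [^] (-k) \<otimes> (inv (a [^] (-k)) \<otimes> inv m \<otimes> a [^] (-k))" .
    moreover have "inv (a [^] (-k)) \<otimes> inv m \<otimes> a [^] (-k) \<in> M"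
      using conj[of "a [^] (-k)" "inv m"] a m subgroup.m_inv_closed[OF sM] by simp
    ultimately show "inv y \<in> S" unfolding S_def by blast
  next
    fix y y' assume "y \<in> S" "y' \<in> S"
    then obtain k m k' m' where y: "y = a [^] (k::int) \<otimes> m" and m: "m \<in> M"
      and y': "y' = a [^] (k'::int) \<otimes> m'" and m': "m' \<in> M" by (auto simp: S_def)
    have mc: "m \<in> carrier G" "m' \<in> carrier G" using m m' Mc by auto
    have "y \<otimes> y' = a [^] k \<otimes> a [^] k' \<otimes> ((inv (a [^] k') \<otimes> m \<otimes> a [^] k') \<otimes> m')"
      using a mc by (simp add: y y' m_assoc my_cancel)
    also have "\<dots> = a [^] (k + k') \<otimes> ((inv (a [^] k') \<otimes> m \<otimes> a [^] k') \<otimes> m')"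
      using a by (simp add: int_pow_mult)
    finally have "y \<otimes> y' = a [^] (k + k') \<otimes> ((inv (a [^] k') \<otimes> m \<otimes> a [^] k') \<otimes> m')" .
    moreover have "(inv (a [^] k') \<otimes> m \<otimes> a [^] k') \<otimes> m' \<in> M"
      using conj[of "a [^] k'" m] a m m' subgroup.m_closed[OF sM] by simp
    ultimately show "y \<otimes> y' \<in> S" unfolding S_def by blast
  qed
  have MS: "M \<subseteq> S"
  proof
    fix m assume m: "m \<in> M"
    hence "m = a [^] (0::int) \<otimes> m" using Mc by auto
    thus "m \<in> S" using m unfolding S_def by blast
  qed
  have aS: "a \<in> S"
  proof -
    have "a = a [^] (1::int) \<otimes> \<one>" using a by simp
    thus ?thesis using subgroup.one_closed[OF sM] unfolding S_def by blast
  qed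
  have "S = carrier G" using M sS MS aS na a_def unfolding maximal_subgroup_def by blast
  hence "x \<in> S" using x by simp
  then obtain k m where xk: "x = a [^] (k::int) \<otimes> m" and m: "m \<in> M" by (auto simp: S_def)
  have mc: "m \<in> carrier G" using m Mc by auto
  have ak: "a [^] k = x [^] (2 * k)"
  proof -
    have "a = x [^] (2::int)" using x by (simp add: a_def int_pow_def2 numeral_2_eq_2)
    thus ?thesis using x by (simp add: int_pow_pow)
  qed
  have "m = inv (a [^] k) \<otimes> x" using xk a mc by (simp add: m_assoc[symmetric])
  also have "\<dots> = x [^] (- (2 * k)) \<otimes> x [^] (1::int)" using x by (simp add: ak int_pow_neg)
  also have "\<dots> = x [^] (- (2 * k) + 1)" by (rule int_pow_mult[OF x, symmetric])
  also have "\<dots> = x [^] (1 - 2 * k)" by (simp add: algebra_simps)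
  finally have m1: "x [^] (1 - 2 * k) \<in> M" using m by simp
  have "coprime (1 - 2 * k) ((2::int) ^ n)"
  proof -
    have "odd (1 - 2 * k)" by simp
    hence "coprime (1 - 2 * k) 2" by simp
    thus ?thesis by simp
  qed
  then obtain u v where uv: "u * (1 - 2 * k) + v * 2 ^ n = 1" using bezout_int[of "1 - 2 * k" "2 ^ n"] by auto
  have xn: "x [^] ((2::int) ^ n) = \<one>"
  proof -
    have "x [^] ((2::int) ^ n) = x [^] (int (2 ^ n))" by simp
    also have "\<dots> = x [^] order G" by (simp only: int_pow_int ordG)
    also have "\<dots> = \<one>" using pow_order_eq_1[OF x] .
    finally show ?thesis .
  qed
  have "x = x [^] (u * (1 - 2 * k) + v * 2 ^ n)" using uv x by simp
  also have "\<dots> = (x [^] (1 - 2 * k)) [^] u \<otimes> (x [^] ((2::int) ^ n)) [^] v"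
    using x by (simp add: int_pow_mult int_pow_pow mult.commute)
  also have "\<dots> = (x [^] (1 - 2 * k)) [^] u" using xn x by simp
  finally have xe: "x = (x [^] (1 - 2 * k)) [^] u" .
  have "x \<in> M" using subgroup_int_pow_closed[OF sM m1, of u] by (subst xe)
  hence "x \<otimes> x \<in> M" using subgroup.m_closed[OF sM] by simp
  thus False using na by simp
qed

lemma nonab: assumes ZD: "grp_center G = derived G (carrier G)" and zZ: "grp_center G = {\<one>, z}"
  and z1: "z \<noteq> \<one>" shows "\<exists>x\<in>carrier G. x \<notin> grp_center G"
  proof (rule ccontr)
  assume "\<not> ?thesis"
  hence allc: "\<And>x. x \<in> carrier G \<Longrightarrow> x \<in> grp_center G" by blast
  have "derived_set G (carrier G) \<subseteq> {\<one>}"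
  proof
    fix c assume "c \<in> derived_set G (carrier G)"
    then obtain x y where xy: "x \<in> carrier G" "y \<in> carrier G" "c = x \<otimes> y \<otimes> inv x \<otimes> inv y" by blast
    have "x \<otimes> y = y \<otimes> x" using allc[OF xy(1)] xy(2) by (simp add: grp_center_def)
    hence "c = y \<otimes> x \<otimes> inv x \<otimes> inv y" using xy by simp
    also have "\<dots> = \<one>" using xy by (simp add: m_assoc)
    finally show "c \<in> {\<one>}" by simp
  qed
  hence "derived G (carrier G) \<subseteq> {\<one>}" unfolding derived_def
    by (rule generate_subgroup_incl[OF _ triv_subgroup])
  thus False using ZD zZ z1 by auto
qed

end

theorem theorem4p4:
  fixes G :: "('a, 'b) monoid_scheme"
  assumes "extraspecial_p_group G 2"
  shows "(\<forall>g \<in> carrier G. \<forall>h \<in> carrier G.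
            automorphic G g h \<longleftrightarrow>
              (group.ord G g = group.ord G h \<and> (g \<in> grp_center G \<longleftrightarrow> h \<in> grp_center G)))
       \<and> card (aut_orbits G) = (if G \<cong> quaternion_group then 3 else 4)"
proof -
  have grp: "group G" and fin: "finite (carrier G)" and ordG: "\<exists>n. order G = 2 ^ n"
    and ZD: "grp_center G = derived G (carrier G)" and DF: "derived G (carrier G) = frattini G"
    and EA: "elementary_abelian_subgroup (grp_center G) G 2" and cZ: "card (grp_center G) = 2"
    using assms by (auto simp: extraspecial_p_group_def special_p_group_def p_group_def)
  interpret group G by (rule grp)
  obtain n where n: "order G = 2 ^ n" using ordG by auto
  have oneZ: "\<one>\<^bsub>G\<^esub> \<in> grp_center G" by (simp add: grp_center_def)
  obtain z where zZ: "grp_center G = {\<one>\<^bsub>G\<^esub>, z}" and z1: "z \<noteq> \<one>\<^bsub>G\<^esub>"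
  proof -
    obtain x y where xy: "grp_center G = {x, y}" "x \<noteq> y" using cZ unfolding card_2_iff by blast
    show ?thesis
    proof (cases "x = \<one>\<^bsub>G\<^esub>")
      case True show ?thesis by (rule that[of y]) (use xy True in auto)
    next
      case False
      hence "y = \<one>\<^bsub>G\<^esub>" using oneZ xy by auto
      show ?thesis by (rule that[of x]) (use xy False \<open>y = \<one>\<^bsub>G\<^esub>\<close> in auto)
    qed
  qed
  have zc: "z \<in> carrier G" using zZ by (auto simp: grp_center_def)
  have zz: "z \<otimes>\<^bsub>G\<^esub> z = \<one>\<^bsub>G\<^esub>"
  proof -
    have "z [^]\<^bsub>G\<^esub> (2::nat) = \<one>\<^bsub>G\<^esub>" using EA zZ by (auto simp: elementary_abelian_subgroup_def)
    thus ?thesis using zc by (simp add: numeral_2_eq_2)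
  qed
  have comm: "x \<otimes>\<^bsub>G\<^esub> y \<otimes>\<^bsub>G\<^esub> inv\<^bsub>G\<^esub> x \<otimes>\<^bsub>G\<^esub> inv\<^bsub>G\<^esub> y \<in> grp_center G"
    if "x \<in> carrier G" "y \<in> carrier G" for x y
  proof -
    have "x \<otimes>\<^bsub>G\<^esub> y \<otimes>\<^bsub>G\<^esub> inv\<^bsub>G\<^esub> x \<otimes>\<^bsub>G\<^esub> inv\<^bsub>G\<^esub> y \<in> derived_set G (carrier G)"
      by (rule UN_I[OF that(1)], rule UN_I[OF that(2)]) simp
    hence "x \<otimes>\<^bsub>G\<^esub> y \<otimes>\<^bsub>G\<^esub> inv\<^bsub>G\<^esub> x \<otimes>\<^bsub>G\<^esub> inv\<^bsub>G\<^esub> y \<in> derived G (carrier G)"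
      unfolding derived_def by (rule generate.incl)
    thus ?thesis using ZD by simp
  qed
  have sq: "x \<otimes>\<^bsub>G\<^esub> x \<in> grp_center G" if x: "x \<in> carrier G" for x
  proof -
    have "x \<otimes>\<^bsub>G\<^esub> x \<in> M" if M: "maximal_subgroup M G" for M
    proof (rule sq_in_maximal[OF n _ M x])
      fix a b assume "a \<in> carrier G" "b \<in> carrier G"
      hence "a \<otimes>\<^bsub>G\<^esub> b \<otimes>\<^bsub>G\<^esub> inv\<^bsub>G\<^esub> a \<otimes>\<^bsub>G\<^esub> inv\<^bsub>G\<^esub> b \<in> frattini G"
        using comm ZD DF by simp
      thus "a \<otimes>\<^bsub>G\<^esub> b \<otimes>\<^bsub>G\<^esub> inv\<^bsub>G\<^esub> a \<otimes>\<^bsub>G\<^esub> inv\<^bsub>G\<^esub> b \<in> M"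
        using M unfolding frattini_def by auto
    qed
    hence "x \<otimes>\<^bsub>G\<^esub> x \<in> frattini G" using x unfolding frattini_def by auto
    thus ?thesis using ZD DF by simp
  qed
  interpret xs G z
  proof unfold_locales
    fix x y assume "x \<in> carrier G" "y \<in> carrier G"
    thus "x \<otimes>\<^bsub>G\<^esub> y \<otimes>\<^bsub>G\<^esub> inv\<^bsub>G\<^esub> x \<otimes>\<^bsub>G\<^esub> inv\<^bsub>G\<^esub> y \<in> {\<one>\<^bsub>G\<^esub>, z}"
      using comm zZ by blast
  next
    fix x assume "x \<in> carrier G"
    thus "x \<otimes>\<^bsub>G\<^esub> x \<in> {\<one>\<^bsub>G\<^esub>, z}" using sq zZ by blast
  qed (simp_all add: fin z1 zz zZ)
  have nab: "\<exists>x\<in>carrier G. x \<notin> grp_center G"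
    by (rule nonab[OF ZD zZ z1])
  show ?thesis
  proof -
    have A: "\<forall>g \<in> carrier G. \<forall>h \<in> carrier G. automorphic G g h \<longleftrightarrow>
              (group.ord G g = group.ord G h \<and> (g \<in> grp_center G \<longleftrightarrow> h \<in> grp_center G))"
      using part_i by blast
    have B: "card (aut_orbits G) = (if G \<cong> quaternion_group then 3 else 4)"
      using card_orbits[OF nab] Q8_iff[OF nab] by simp
    show ?thesis using A B by blast
  qed
qed


end
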